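(* Let $(X,d)$ be a metric space and let $\{T_n\}_{n=1}^\infty$, $f$ and $g$ be selfmaps of $X$. Assume that $\overline{T_1(X)}\subseteq f(X)$, $\overline{T_1(X)}\subseteq g(X)$, $\overline{T_1(X)}$ is complete, and that there is $\psi\in\Psi$ such that \[d(T_1x,T_jy)\leq\min\{d(fx,gy)-\psi(d(fx,gy)),\ d(gx,fy)-\psi(d(gx,fy))\}\] for all $x,y\in X$ and all $j=1,2,3,\ldots$. If the pairs $(T_1,f)$ and $(T_1,g)$ are weakly compatible, then $\{T_n\}_{n=1}^\infty$, $f$ and $g$ have a unique common fixed point in $X$.
   Context: $R_+=[0,\infty)$. $\Psi$ denotes the set of all functions $\psi:R_+\to R_+$ that are continuous and nondecreasing on $R_+$, with $\psi(t)>0$ for $t>0$, $\psi(0)=0$ and $\lim_{t\to\infty}\psi(t)=\infty$. A pair $(T,f)$ of selfmaps of $X$ is weakly compatible if $Tx=fx$ implies $T(fx)=f(Tx)$. Overline denotes closure in $X$. *)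

theory Defs
  imports "HOL-Analysis.Analysis"
begin

definition Psi :: "(real \<Rightarrow> real) set" where
  "Psi = {\<psi>. (\<forall>t\<ge>0. \<psi> t \<ge> 0) \<and> continuous_on {0..} \<psi> \<and> mono_on {0..} \<psi>
           \<and> (\<forall>t>0. \<psi> t > 0) \<and> \<psi> 0 = 0 \<and> filterlim \<psi> at_top at_top}"

definition weakly_compatible :: "('a \<Rightarrow> 'a) \<Rightarrow> ('a \<Rightarrow> 'a) \<Rightarrow> bool" where
  "weakly_compatible T f \<longleftrightarrow> (\<forall>x. T x = f x \<longrightarrow> T (f x) = f (T x))"

end

theory Submission
  imports Defs
begin

lemma weak_contr_fix:
  fixes F :: "'a::metric_space \<Rightarrow> 'a" and \<psi> :: "real \<Rightarrow> real"
  assumes K: "complete K" "p0 \<in> K"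
    and FK: "\<And>p. p \<in> K \<Longrightarrow> F p \<in> K"
    and Fc: "\<And>p q. p \<in> K \<Longrightarrow> q \<in> K \<Longrightarrow> dist (F p) (F q) \<le> dist p q - \<psi> (dist p q)"
    and mono: "\<And>s t. 0 \<le> s \<Longrightarrow> s \<le> t \<Longrightarrow> \<psi> s \<le> \<psi> t"
    and pos: "\<And>t. t > 0 \<Longrightarrow> \<psi> t > 0"
    and nn: "\<And>t. t \<ge> 0 \<Longrightarrow> \<psi> t \<ge> 0"
  shows "\<exists>z\<in>K. F z = z"
proof -
  define p where "p n = (F ^^ n) p0" for n
  have pK: "p n \<in> K" for n by (induction n) (auto simp: p_def K FK)
  have pS: "p (Suc n) = F (p n)" for n by (simp add: p_def)
  define d where "d n = dist (p n) (p (Suc n))" for n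
  have dstep: "d (Suc n) \<le> d n - \<psi> (d n)" for n
    using Fc[OF pK[of n] pK[of "Suc n"]] unfolding d_def by (simp only: pS)
  have small: "\<exists>N. d N < \<delta>" if "\<delta> > 0" for \<delta>
  proof (rule ccontr)
    assume "\<not> ?thesis"
    hence ge: "d n \<ge> \<delta>" for n by (simp add: not_less)
    have "d n \<le> d 0 - real n * \<psi> \<delta>" for n
    proof (induction n)
      case 0 then show ?case by simp
    next
      case (Suc n)
      have "\<psi> \<delta> \<le> \<psi> (d n)" using mono[of \<delta> "d n"] ge[of n] that by simp
      then show ?case using dstep[of n] Suc by (simp add: algebra_simps)
    qed
    moreover obtain n where "real n * \<psi> \<delta> > d 0"
      using reals_Archimedean3[OF pos[OF \<open>\<delta> > 0\<close>]] by blast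
    ultimately have "d n < 0" by (meson diff_less_0_iff_less le_less_trans)
    moreover have "d n \<ge> 0" by (simp add: d_def)
    ultimately show False by simp
  qed
  have "Cauchy p"
    unfolding Cauchy_def
  proof (intro allI impI)
    fix e :: real assume e: "e > 0"
    define \<epsilon> where "\<epsilon> = e / 3"
    have \<epsilon>: "\<epsilon> > 0" using e by (simp add: \<epsilon>_def)
    define \<eta> where "\<eta> = min (\<epsilon>/2) (\<psi> (\<epsilon>/2))"
    have "\<eta> > 0" using \<epsilon> pos[of "\<epsilon>/2"] by (simp add: \<eta>_def)
    then obtain N where N: "d N < \<eta>" using small by blast
    have ball: "dist (p m) (p N) \<le> \<epsilon>" if "m \<ge> N" for m
      using that
    proof (induction m rule: dec_induct)
      case base then show ?case using \<epsilon> by simp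
    next
      case (step m)
      define t where "t = dist (p m) (p N)"
      have t0: "t \<ge> 0" by (simp add: t_def)
      have "dist (p (Suc m)) (p N) \<le> dist (F (p m)) (F (p N)) + dist (F (p N)) (p N)"
        unfolding pS by (rule dist_triangle)
      also have "\<dots> \<le> t - \<psi> t + d N"
        using Fc[OF pK pK, of m N] by (simp add: t_def d_def pS dist_commute)
      also have "\<dots> \<le> \<epsilon>"
      proof (cases "t \<ge> \<epsilon>/2")
        case True
        have "\<psi> (\<epsilon>/2) \<le> \<psi> t" using mono True \<epsilon> by simp
        then show ?thesis using N step.IH \<eta>_def t_def by simp
      next
        case False
        then show ?thesis using nn[OF t0] N \<eta>_def by simp
      qed
      finally show ?case .
    qed
    show "\<exists>M. \<forall>m\<ge>M. \<forall>n\<ge>M. dist (p m) (p n) < e"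
    proof (intro exI allI impI)
      fix m n assume "m \<ge> N" "n \<ge> N"
      then have "dist (p m) (p n) \<le> dist (p m) (p N) + dist (p n) (p N)"
        by (simp add: dist_triangle2)
      also have "\<dots> \<le> 2 * \<epsilon>" using ball \<open>m \<ge> N\<close> \<open>n \<ge> N\<close> by (smt (verit))
      also have "\<dots> < e" using e by (simp add: \<epsilon>_def)
      finally show "dist (p m) (p n) < e" .
    qed
  qed
  then obtain z where z: "z \<in> K" "p \<longlonglongrightarrow> z"
    using K(1) pK unfolding complete_def by blast
  have l1: "(\<lambda>n. F (p n)) \<longlonglongrightarrow> z"
    using LIMSEQ_Suc[OF z(2)] by (simp add: pS)
  have h0: "(\<lambda>n. dist (p n) z) \<longlonglongrightarrow> 0" using z(2) tendsto_dist_iff by blast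
  have ev0: "\<forall>\<^sub>F n in sequentially. 0 \<le> dist (F (p n)) (F z)" by simp
  have "dist (F (p n)) (F z) \<le> dist (p n) z" for n
    using Fc[OF pK z(1), of n] nn[of "dist (p n) z"] by simp
  then have ev1: "\<forall>\<^sub>F n in sequentially. dist (F (p n)) (F z) \<le> dist (p n) z"
    by (simp add: always_eventually)
  have "(\<lambda>n. dist (F (p n)) (F z)) \<longlonglongrightarrow> 0"
    by (rule tendsto_sandwich[OF ev0 ev1 tendsto_const h0])
  then have l2: "(\<lambda>n. F (p n)) \<longlonglongrightarrow> F z" using tendsto_dist_iff by blast
  show ?thesis using LIMSEQ_unique[OF l1 l2] z(1) by metis
qed

theorem corollary2p2:
  fixes T :: "nat \<Rightarrow> 'a::metric_space \<Rightarrow> 'a" and f g :: "'a \<Rightarrow> 'a" and \<psi> :: "real \<Rightarrow> real"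
  assumes "closure (range (T 1)) \<subseteq> range f"
    and "closure (range (T 1)) \<subseteq> range g"
    and "complete (closure (range (T 1)))"
    and "\<psi> \<in> Psi"
    and "\<And>x y j. j \<ge> 1 \<Longrightarrow> dist (T 1 x) (T j y) \<le>
           min (dist (f x) (g y) - \<psi> (dist (f x) (g y))) (dist (g x) (f y) - \<psi> (dist (g x) (f y)))"
    and "weakly_compatible (T 1) f" and "weakly_compatible (T 1) g"
  shows "\<exists>!z. (\<forall>n\<ge>1. T n z = z) \<and> f z = z \<and> g z = z"
proof -
  define S where "S = T 1"
  define K where "K = closure (range S)"
  have psi: "\<forall>t\<ge>0. \<psi> t \<ge> 0" "mono_on {0..} \<psi>" "\<forall>t>0. \<psi> t > 0" "\<psi> 0 = 0"
    using assms(4) unfolding Psi_def by auto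
  have mono: "\<And>s t. 0 \<le> s \<Longrightarrow> s \<le> t \<Longrightarrow> \<psi> s \<le> \<psi> t"
    using psi(2) by (simp add: mono_onD)
  have C1: "dist (S x) (T j y) \<le> dist (f x) (g y) - \<psi> (dist (f x) (g y))" if "j \<ge> 1" for x y j
    using assms(5)[OF that, of x y] by (simp add: S_def)
  have C2: "dist (S x) (T j y) \<le> dist (g x) (f y) - \<psi> (dist (g x) (f y))" if "j \<ge> 1" for x y j
    using assms(5)[OF that, of x y] by (simp add: S_def)
  have key: "S x = T j y" if "f x = g y" "j \<ge> 1" for x y j
    using C1[OF that(2), of x y] that(1) psi(4) by simp
  have Kf: "K \<subseteq> range f" and Kg: "K \<subseteq> range g" using assms(1,2) by (auto simp: K_def S_def)
  define F where "F p = S (SOME a. f a = p)" for p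
  have Fg: "F p = S b" if "p \<in> K" "g b = p" for p b
  proof -
    have "\<exists>a. f a = p" using Kf that(1) by auto
    then have "f (SOME a. f a = p) = p" by (rule someI_ex)
    then show ?thesis using key[of "SOME a. f a = p" b 1] that by (simp add: F_def S_def)
  qed
  have Ff: "F p = S a" if "p \<in> K" "f a = p" for p a
  proof -
    have "p \<in> range g" using Kg that(1) by blast
    then obtain b where "g b = p" by blast
    then show ?thesis using Fg[OF that(1)] key[of a b 1] that by (simp add: S_def)
  qed
  have FK: "F p \<in> K" if pk: "p \<in> K" for p
  proof -
    have "p \<in> range f" using Kf pk by blast
    then obtain a where "f a = p" by blast
    then have "F p = S a" using Ff[OF pk] by blast
    then show ?thesis unfolding K_def by (metis closure_subset rangeI subsetD)
  qed
  have Fc: "dist (F p) (F q) \<le> dist p q - \<psi> (dist p q)" if pq: "p \<in> K" "q \<in> K" for p q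
  proof -
    have "p \<in> range f" "q \<in> range g" using Kf Kg pq by blast+
    then obtain a b where a: "f a = p" and b: "g b = q" by blast
    show ?thesis using Ff[OF pq(1) a] Fg[OF pq(2) b] C1[of 1 a b] a b by (simp add: S_def)
  qed
  have "K \<noteq> {}" by (simp add: K_def)
  then obtain p0 where "p0 \<in> K" by blast
  obtain z where z: "z \<in> K" "F z = z"
    using weak_contr_fix[of K p0 F \<psi>, OF assms(3)[folded S_def, folded K_def] \<open>p0 \<in> K\<close> FK Fc mono]
      psi by blast
  obtain u where u: "f u = z" using Kf z by auto
  obtain v where v: "g v = z" using Kg z by auto
  have Su: "S u = z" using Ff[OF z(1) u] z by simp
  have Sv: "S v = z" using Fg[OF z(1) v] z by simp
  have Sz: "S z = f z" using assms(6) Su u unfolding weakly_compatible_def S_def by metis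
  have Sz': "S z = g z" using assms(7) Sv v unfolding weakly_compatible_def S_def by metis
  have "dist (S z) z \<le> dist (S z) z - \<psi> (dist (S z) z)"
    using C1[of 1 z v] Sv v Sz by (simp add: S_def)
  then have "\<psi> (dist (S z) z) \<le> 0" by simp
  then have Szz: "S z = z" using psi(3) by (metis dist_pos_lt not_le)
  have fz: "f z = z" and gz: "g z = z" using Szz Sz Sz' by auto
  have Tz: "T n z = z" if "n \<ge> 1" for n using key[of z z n] fz gz Szz that by simp
  show ?thesis
  proof (rule ex1I[of _ z])
    show "(\<forall>n\<ge>1. T n z = z) \<and> f z = z \<and> g z = z" using Tz fz gz by auto
  next
    fix w assume w: "(\<forall>n\<ge>1. T n w = w) \<and> f w = w \<and> g w = w"
    have "dist w z \<le> dist w z - \<psi> (dist w z)"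
      using C1[of 1 w z] w fz gz Szz by (simp add: S_def)
    then have "\<psi> (dist w z) \<le> 0" by simp
    then show "w = z" using psi(3) by (metis dist_pos_lt not_le)
  qed
qed

end
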